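(* Let $\alpha,\beta,\gamma,\delta\in\mathbb{R}$ with $\alpha+\delta\neq 0$ and $\alpha\gamma-\beta\delta=0$, and let $G_6$ be the connected, simply connected Lie group whose Lie algebra $\mathfrak{g}_6$ has a basis $\{e_1,e_2,e_3\}$ with $[e_1,e_2]=\alpha e_2+\beta e_3$, $[e_1,e_3]=\gamma e_2+\delta e_3$, $[e_2,e_3]=0$, equipped with the left-invariant Lorentzian metric $g$ for which $\{e_1,e_2,e_3\}$ is pseudo-orthonormal with $e_3$ timelike, and with the product structure $J$. Let $\lambda_0,c\in\mathbb{R}$. Then there exists a derivation $D$ of $\mathfrak{g}_6$ with $\widetilde{\mathrm{Ric}}^1=(s^1\lambda_0+c)\mathrm{Id}+D$ (i.e. $(G_6,g,J)$ is an algebraic Schouten soliton associated to the Kobayashi–Nomizu connection $\nabla^1$) if and only if one of the following holds: (i) $\alpha=\beta=0$, $\delta\neq0$ and $c=0$; (ii) $\alpha\neq0$, $\beta=\gamma=0$, $\alpha+\delta\neq0$ and $c=-\alpha^2+2\alpha^2\lambda_0$.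
   Context: Pseudo-orthonormal means $g(e_1,e_1)=g(e_2,e_2)=1$, $g(e_3,e_3)=-1$, $g(e_i,e_j)=0$ for $i\neq j$; left-invariant tensors are identified with their values on $\mathfrak{g}$. $\nabla$ is the Levi-Civita connection of $g$. The product structure $J$ is the left-invariant endomorphism with $Je_1=e_1$, $Je_2=e_2$, $Je_3=-e_3$. The canonical connection is $\nabla^0_XY=\nabla_XY-\frac12(\nabla_XJ)JY$, and the Kobayashi–Nomizu connection is $\nabla^1_XY=\nabla^0_XY-\frac14[(\nabla_YJ)JX-(\nabla_{JY}J)X]$. For $k=0,1$: $R^k(X,Y)Z=\nabla^k_X\nabla^k_YZ-\nabla^k_Y\nabla^k_XZ-\nabla^k_{[X,Y]}Z$; $\rho^k(X,Y)=-g(R^k(X,e_1)Y,e_1)-g(R^k(X,e_2)Y,e_2)+g(R^k(X,e_3)Y,e_3)$; $\widetilde\rho^k(X,Y)=\frac12(\rho^k(X,Y)+\rho^k(Y,X))$; $\widetilde{\mathrm{Ric}}^k$ is defined by $\widetilde\rho^k(X,Y)=g(\widetilde{\mathrm{Ric}}^k(X),Y)$; and $s^k=\widetilde\rho^k(e_1,e_1)+\widetilde\rho^k(e_2,e_2)-\widetilde\rho^k(e_3,e_3)$. A derivation of $\mathfrak{g}$ is a linear map $D$ with $D[X,Y]=[DX,Y]+[X,DY]$. $(G,g,J)$ is an algebraic Schouten soliton associated to $\nabla^k$ (with real constants $\lambda_0,c$) if $\widetilde{\mathrm{Ric}}^k=(s^k\lambda_0+c)\mathrm{Id}+D$ for some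 derivation $D$. *)

theory Defs
  imports "HOL-Analysis.Analysis"
begin

text \<open>The Lie algebra g6 is modelled as real^3; e1, e2, e3 are the standard basis
vectors (coordinates 1, 2, 3). All definitions are parameterised by the structure
constants a b c d (alpha, beta, gamma, delta).\<close>

definition e1 :: "real^3" where "e1 = vector [1, 0, 0]"
definition e2 :: "real^3" where "e2 = vector [0, 1, 0]"
definition e3 :: "real^3" where "e3 = vector [0, 0, 1]"

text \<open>Lie bracket: [e1,e2] = a e2 + b e3, [e1,e3] = c e2 + d e3, [e2,e3] = 0, extended bilinearly.\<close>
definition lb :: "real \<Rightarrow> real \<Rightarrow> real \<Rightarrow> real \<Rightarrow> real^3 \<Rightarrow> real^3 \<Rightarrow> real^3" where
  "lb a b c d X Y =
     (X$1 * Y$2 - X$2 * Y$1) *\<^sub>R vector [0, a, b]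
   + (X$1 * Y$3 - X$3 * Y$1) *\<^sub>R vector [0, c, d]"

definition gm :: "real^3 \<Rightarrow> real^3 \<Rightarrow> real" where
  "gm X Y = X$1 * Y$1 + X$2 * Y$2 - X$3 * Y$3"

definition koszul :: "real \<Rightarrow> real \<Rightarrow> real \<Rightarrow> real \<Rightarrow> real^3 \<Rightarrow> real^3 \<Rightarrow> real^3 \<Rightarrow> real" where
  "koszul a b c d X Y Z =
     (1/2) * (gm (lb a b c d X Y) Z - gm (lb a b c d Y Z) X + gm (lb a b c d Z X) Y)"

text \<open>Levi-Civita connection: nabla_X Y = sum_k g(e_k,e_k) g(nabla_X Y, e_k) e_k.\<close>
definition LC :: "real \<Rightarrow> real \<Rightarrow> real \<Rightarrow> real \<Rightarrow> real^3 \<Rightarrow> real^3 \<Rightarrow> real^3" where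
  "LC a b c d X Y = vector [koszul a b c d X Y e1, koszul a b c d X Y e2, - koszul a b c d X Y e3]"

definition Jp :: "real^3 \<Rightarrow> real^3" where
  "Jp X = vector [X$1, X$2, - X$3]"

definition nablaJ :: "real \<Rightarrow> real \<Rightarrow> real \<Rightarrow> real \<Rightarrow> real^3 \<Rightarrow> real^3 \<Rightarrow> real^3" where
  "nablaJ a b c d X Y = LC a b c d X (Jp Y) - Jp (LC a b c d X Y)"

definition nabla0 :: "real \<Rightarrow> real \<Rightarrow> real \<Rightarrow> real \<Rightarrow> real^3 \<Rightarrow> real^3 \<Rightarrow> real^3" where
  "nabla0 a b c d X Y = LC a b c d X Y - (1/2) *\<^sub>R nablaJ a b c d X (Jp Y)"

definition nabla1 :: "real \<Rightarrow> real \<Rightarrow> real \<Rightarrow> real \<Rightarrow> real^3 \<Rightarrow> real^3 \<Rightarrow> real^3" where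
  "nabla1 a b c d X Y = nabla0 a b c d X Y
     - (1/4) *\<^sub>R (nablaJ a b c d Y (Jp X) - nablaJ a b c d (Jp Y) X)"

definition R1 :: "real \<Rightarrow> real \<Rightarrow> real \<Rightarrow> real \<Rightarrow> real^3 \<Rightarrow> real^3 \<Rightarrow> real^3 \<Rightarrow> real^3" where
  "R1 a b c d X Y Z = nabla1 a b c d X (nabla1 a b c d Y Z) - nabla1 a b c d Y (nabla1 a b c d X Z)
     - nabla1 a b c d (lb a b c d X Y) Z"

definition rho1 :: "real \<Rightarrow> real \<Rightarrow> real \<Rightarrow> real \<Rightarrow> real^3 \<Rightarrow> real^3 \<Rightarrow> real" where
  "rho1 a b c d X Y = - gm (R1 a b c d X e1 Y) e1 - gm (R1 a b c d X e2 Y) e2 + gm (R1 a b c d X e3 Y) e3"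

definition srho1 :: "real \<Rightarrow> real \<Rightarrow> real \<Rightarrow> real \<Rightarrow> real^3 \<Rightarrow> real^3 \<Rightarrow> real" where
  "srho1 a b c d X Y = (1/2) * (rho1 a b c d X Y + rho1 a b c d Y X)"

text \<open>Ricci operator: the unique endomorphism with srho1(X,Y) = g(Ric X, Y).\<close>
definition Ric1 :: "real \<Rightarrow> real \<Rightarrow> real \<Rightarrow> real \<Rightarrow> real^3 \<Rightarrow> real^3" where
  "Ric1 a b c d X = vector [srho1 a b c d X e1, srho1 a b c d X e2, - srho1 a b c d X e3]"

definition scal1 :: "real \<Rightarrow> real \<Rightarrow> real \<Rightarrow> real \<Rightarrow> real" where
  "scal1 a b c d = srho1 a b c d e1 e1 + srho1 a b c d e2 e2 - srho1 a b c d e3 e3"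

definition is_derivation :: "real \<Rightarrow> real \<Rightarrow> real \<Rightarrow> real \<Rightarrow> (real^3 \<Rightarrow> real^3) \<Rightarrow> bool" where
  "is_derivation a b c d D \<longleftrightarrow> linear D \<and>
     (\<forall>X Y. D (lb a b c d X Y) = lb a b c d (D X) Y + lb a b c d X (D Y))"

end

theory Submission
  imports Defs
begin

lemma vec3_eq: "(X::real^3) = Y \<longleftrightarrow> X$1 = Y$1 \<and> X$2 = Y$2 \<and> X$3 = Y$3"
  by (simp add: vec_eq_iff forall_3)

lemma e_comp[simp]: "e1$1 = 1" "e1$2 = 0" "e1$3 = 0" "e2$1 = 0" "e2$2 = 1" "e2$3 = 0"
  "e3$1 = 0" "e3$2 = 0" "e3$3 = 1"
  by (simp_all add: e1_def e2_def e3_def)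

lemma lb_comp[simp]: "lb a b c d X Y $ 1 = 0"
  "lb a b c d X Y $ 2 = (X$1 * Y$2 - X$2 * Y$1) * a + (X$1 * Y$3 - X$3 * Y$1) * c"
  "lb a b c d X Y $ 3 = (X$1 * Y$2 - X$2 * Y$1) * b + (X$1 * Y$3 - X$3 * Y$1) * d"
  by (simp_all add: lb_def)

lemma Jp_comp[simp]: "Jp X $ 1 = X$1" "Jp X $ 2 = X$2" "Jp X $ 3 = - X$3"
  by (simp_all add: Jp_def)

lemma LC_comp: "LC a b c d X Y $ 1 = koszul a b c d X Y e1"
  "LC a b c d X Y $ 2 = koszul a b c d X Y e2" "LC a b c d X Y $ 3 = - koszul a b c d X Y e3"
  by (simp_all add: LC_def)

lemma kos_eq: "koszul a b c d X Y Z = (1/2) * (gm (lb a b c d X Y) Z - gm (lb a b c d Y Z) X + gm (lb a b c d Z X) Y)"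
  by (simp add: koszul_def)

lemma nJ_comp: "nablaJ a b c d X Y $ i = LC a b c d X (Jp Y) $ i - Jp (LC a b c d X Y) $ i"
  by (simp add: nablaJ_def)

lemma n1_comp: "nabla1 a b c d X Y $ i = LC a b c d X Y $ i - (1/2) * nablaJ a b c d X (Jp Y) $ i
  - (1/4) * (nablaJ a b c d Y (Jp X) $ i - nablaJ a b c d (Jp Y) X $ i)"
  by (simp add: nabla1_def nabla0_def)


lemma n1_c[simp]: "nabla1 a b c d X Y $ 1 = a * X$2 * Y$2"
  "nabla1 a b c d X Y $ 2 = - c * X$3 * Y$1 - a * X$2 * Y$1"
  "nabla1 a b c d X Y $ 3 = d * X$1 * Y$3"
  by (simp_all add: n1_comp nJ_comp LC_comp kos_eq gm_def algebra_simps)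


lemma R1_c[simp]: "R1 a b c d X Y Z $ i = nabla1 a b c d X (nabla1 a b c d Y Z) $ i - nabla1 a b c d Y (nabla1 a b c d X Z) $ i
     - nabla1 a b c d (lb a b c d X Y) Z $ i"
  by (simp add: R1_def)

lemma scal_eq: "scal1 a b c d = - b*c - 2*a*a"
  by (simp add: scal1_def srho1_def rho1_def gm_def field_simps)

lemma Ric_eq: "Ric1 a b c d X = vector [(- b*c - a*a) * X$1, - a*a * X$2, 0]"
  by (simp add: vec3_eq Ric1_def srho1_def rho1_def gm_def field_simps)

lemma deriv_iff:
  fixes a b c d k :: real
  shows "is_derivation a b c d (\<lambda>X. Ric1 a b c d X - k *\<^sub>R X) \<longleftrightarrow>
    (let p = - b*c - a*a - k; q = - a*a - k; r = - k in
     a*q = a*(p+q) \<and> b*r = b*(p+q) \<and> c*q = c*(p+r) \<and> d*r = d*(p+r))"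
proof
  assume H: "is_derivation a b c d (\<lambda>X. Ric1 a b c d X - k *\<^sub>R X)"
  have h1: "\<And>i. (Ric1 a b c d (lb a b c d e1 e2) - k *\<^sub>R lb a b c d e1 e2) $ i =
     (lb a b c d (Ric1 a b c d e1 - k *\<^sub>R e1) e2 + lb a b c d e1 (Ric1 a b c d e2 - k *\<^sub>R e2)) $ i"
    using H unfolding is_derivation_def by metis
  have h2: "\<And>i. (Ric1 a b c d (lb a b c d e1 e3) - k *\<^sub>R lb a b c d e1 e3) $ i =
     (lb a b c d (Ric1 a b c d e1 - k *\<^sub>R e1) e3 + lb a b c d e1 (Ric1 a b c d e3 - k *\<^sub>R e3)) $ i"
    using H unfolding is_derivation_def by metis
  show "let p = - b*c - a*a - k; q = - a*a - k; r = - k in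
     a*q = a*(p+q) \<and> b*r = b*(p+q) \<and> c*q = c*(p+r) \<and> d*r = d*(p+r)"
  proof -
    have hh: "a * k + a * (a * a) = - (a * (b * c))"
      "b * k + a * (a * (b * 2)) = - (b * (b * c))" "c * k + b * (c * c) = 0"
      "d * k + b * (c * d) = - (a * (a * d))"
      using h1[of 2] h1[of 3] h2[of 2] h2[of 3] by (simp_all add: Ric_eq algebra_simps)
    show ?thesis unfolding Let_def using hh by (intro conjI; algebra)
  qed
next
  assume "let p = - b*c - a*a - k; q = - a*a - k; r = - k in
     a*q = a*(p+q) \<and> b*r = b*(p+q) \<and> c*q = c*(p+r) \<and> d*r = d*(p+r)"
  hence E: "a*(- a*a - k) = a*((- b*c - a*a - k)+(- a*a - k))" "b*(-k) = b*((- b*c - a*a - k)+(- a*a - k))"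
    "c*(- a*a - k) = c*((- b*c - a*a - k)+(-k))" "d*(-k) = d*((- b*c - a*a - k)+(-k))"
    unfolding Let_def by blast+
  show "is_derivation a b c d (\<lambda>X. Ric1 a b c d X - k *\<^sub>R X)"
    unfolding is_derivation_def
  proof (intro conjI allI)
    show "linear (\<lambda>X. Ric1 a b c d X - k *\<^sub>R X)"
      by (rule linearI) (simp_all add: vec3_eq Ric_eq algebra_simps)
  next
    fix X Y :: "real^3"
    have "a * (k + a*a + b*c) = 0" using E(1) by (simp add: algebra_simps)
    hence "a = 0 \<or> k + a*a + b*c = 0" by (simp only: mult_eq_0_iff)
    hence f1: "- (b*c) = k + a*a \<or> a = 0" by linarith
    have "b * (k + 2*a*a + b*c) = 0" using E(2) by (simp add: algebra_simps)
    hence "b = 0 \<or> k + 2*a*a + b*c = 0" by (simp only: mult_eq_0_iff)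
    hence f2: "b = 0 \<or> k + a * (a * 2) = - (b * c)" by (auto simp: algebra_simps)
    have "d * (k + a*a + b*c) = 0" using E(4) by (simp add: algebra_simps)
    hence "d = 0 \<or> k + a*a + b*c = 0" by (simp only: mult_eq_0_iff)
    hence f3: "- (b*c) = k + a*a \<or> d = 0" by linarith
    show "Ric1 a b c d (lb a b c d X Y) - k *\<^sub>R lb a b c d X Y =
          lb a b c d (Ric1 a b c d X - k *\<^sub>R X) Y + lb a b c d X (Ric1 a b c d Y - k *\<^sub>R Y)"
      apply (simp add: vec3_eq Ric_eq)
      using E by (intro conjI; algebra)
  qed
qed

theorem theorem4p13:
  fixes \<alpha> \<beta> \<gamma> \<delta> lam0 c :: real
  assumes "\<alpha> + \<delta> \<noteq> 0" and "\<alpha> * \<gamma> - \<beta> * \<delta> = 0"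
  shows "(\<exists>D. is_derivation \<alpha> \<beta> \<gamma> \<delta> D \<and>
            Ric1 \<alpha> \<beta> \<gamma> \<delta> = (\<lambda>X. (scal1 \<alpha> \<beta> \<gamma> \<delta> * lam0 + c) *\<^sub>R X + D X))
         \<longleftrightarrow> ((\<alpha> = 0 \<and> \<beta> = 0 \<and> \<delta> \<noteq> 0 \<and> c = 0) \<or>
              (\<alpha> \<noteq> 0 \<and> \<beta> = 0 \<and> \<gamma> = 0 \<and> \<alpha> + \<delta> \<noteq> 0 \<and> c = - (\<alpha> * \<alpha>) + 2 * (\<alpha> * \<alpha>) * lam0))"
proof -
  define k where "k = scal1 \<alpha> \<beta> \<gamma> \<delta> * lam0 + c"
  have sc: "scal1 \<alpha> \<beta> \<gamma> \<delta> = - \<beta>*\<gamma> - 2*\<alpha>*\<alpha>" by (rule scal_eq)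
  have L: "(\<exists>D. is_derivation \<alpha> \<beta> \<gamma> \<delta> D \<and>
            Ric1 \<alpha> \<beta> \<gamma> \<delta> = (\<lambda>X. (scal1 \<alpha> \<beta> \<gamma> \<delta> * lam0 + c) *\<^sub>R X + D X))
        \<longleftrightarrow> is_derivation \<alpha> \<beta> \<gamma> \<delta> (\<lambda>X. Ric1 \<alpha> \<beta> \<gamma> \<delta> X - k *\<^sub>R X)"
  proof
    assume "\<exists>D. is_derivation \<alpha> \<beta> \<gamma> \<delta> D \<and>
            Ric1 \<alpha> \<beta> \<gamma> \<delta> = (\<lambda>X. (scal1 \<alpha> \<beta> \<gamma> \<delta> * lam0 + c) *\<^sub>R X + D X)"
    then obtain D where D1: "is_derivation \<alpha> \<beta> \<gamma> \<delta> D"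
      and D2: "Ric1 \<alpha> \<beta> \<gamma> \<delta> = (\<lambda>X. k *\<^sub>R X + D X)" unfolding k_def by blast
    have "D = (\<lambda>X. Ric1 \<alpha> \<beta> \<gamma> \<delta> X - k *\<^sub>R X)" by (rule ext) (simp add: D2)
    with D1 show "is_derivation \<alpha> \<beta> \<gamma> \<delta> (\<lambda>X. Ric1 \<alpha> \<beta> \<gamma> \<delta> X - k *\<^sub>R X)" by simp
  next
    assume "is_derivation \<alpha> \<beta> \<gamma> \<delta> (\<lambda>X. Ric1 \<alpha> \<beta> \<gamma> \<delta> X - k *\<^sub>R X)"
    moreover have "Ric1 \<alpha> \<beta> \<gamma> \<delta> = (\<lambda>X. (scal1 \<alpha> \<beta> \<gamma> \<delta> * lam0 + c) *\<^sub>R X + (Ric1 \<alpha> \<beta> \<gamma> \<delta> X - k *\<^sub>R X))"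
      by (rule ext) (simp add: k_def)
    ultimately show "\<exists>D. is_derivation \<alpha> \<beta> \<gamma> \<delta> D \<and>
            Ric1 \<alpha> \<beta> \<gamma> \<delta> = (\<lambda>X. (scal1 \<alpha> \<beta> \<gamma> \<delta> * lam0 + c) *\<^sub>R X + D X)" by blast
  qed
  have M: "(\<alpha>*(- \<alpha>*\<alpha> - k) = \<alpha>*((- \<beta>*\<gamma> - \<alpha>*\<alpha> - k)+(- \<alpha>*\<alpha> - k)) \<and> \<beta>*(-k) = \<beta>*((- \<beta>*\<gamma> - \<alpha>*\<alpha> - k)+(- \<alpha>*\<alpha> - k)) \<and>
    \<gamma>*(- \<alpha>*\<alpha> - k) = \<gamma>*((- \<beta>*\<gamma> - \<alpha>*\<alpha> - k)+(-k)) \<and> \<delta>*(-k) = \<delta>*((- \<beta>*\<gamma> - \<alpha>*\<alpha> - k)+(-k)))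
    \<longleftrightarrow> ((\<alpha> = 0 \<and> \<beta> = 0 \<and> \<delta> \<noteq> 0 \<and> c = 0) \<or>
              (\<alpha> \<noteq> 0 \<and> \<beta> = 0 \<and> \<gamma> = 0 \<and> \<alpha> + \<delta> \<noteq> 0 \<and> c = - (\<alpha> * \<alpha>) + 2 * (\<alpha> * \<alpha>) * lam0))"
    (is "?A \<longleftrightarrow> ?B")
  proof
    assume A: ?A
    have p1: "\<alpha> * (\<beta>*\<gamma> + \<alpha>*\<alpha> + k) = 0" using A by algebra
    have p2: "\<delta> * (\<beta>*\<gamma> + \<alpha>*\<alpha> + k) = 0" using A by algebra
    have p0: "\<beta>*\<gamma> + \<alpha>*\<alpha> + k = 0"
    proof (rule ccontr)
      assume "\<beta>*\<gamma> + \<alpha>*\<alpha> + k \<noteq> 0"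
      hence "\<alpha> = 0" "\<delta> = 0" using p1 p2 by simp_all
      thus False using assms(1) by simp
    qed
    have q1: "\<beta> * (\<alpha>*\<alpha>) = 0" using A p0 by algebra
    have q2: "\<gamma> * (\<alpha>*\<alpha>) = 0" using A p0 by algebra
    show ?B
    proof (cases "\<alpha> = 0")
      case True
      hence "\<beta> * \<delta> = 0" using assms(2) by simp
      moreover have "\<delta> \<noteq> 0" using True assms(1) by simp
      ultimately have "\<beta> = 0" by simp
      hence "k = 0" "scal1 \<alpha> \<beta> \<gamma> \<delta> = 0" using p0 True sc by simp_all
      hence "c = 0" using k_def by simp
      thus ?B using True \<open>\<beta> = 0\<close> \<open>\<delta> \<noteq> 0\<close> by simp
    next
      case False
      hence "\<beta> = 0" "\<gamma> = 0" using q1 q2 by simp_all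
      hence "k = - \<alpha>*\<alpha>" "scal1 \<alpha> \<beta> \<gamma> \<delta> = -2*\<alpha>*\<alpha>" using p0 sc by simp_all
      hence "c = - (\<alpha> * \<alpha>) + 2 * (\<alpha> * \<alpha>) * lam0" using k_def by (simp add: algebra_simps)
      thus ?B using False \<open>\<beta> = 0\<close> \<open>\<gamma> = 0\<close> assms(1) by simp
    qed
  next
    assume ?B
    thus ?A
    proof
      assume H: "\<alpha> = 0 \<and> \<beta> = 0 \<and> \<delta> \<noteq> 0 \<and> c = 0"
      hence "k = 0" using k_def sc by simp
      thus ?A using H by simp
    next
      assume H: "\<alpha> \<noteq> 0 \<and> \<beta> = 0 \<and> \<gamma> = 0 \<and> \<alpha> + \<delta> \<noteq> 0 \<and> c = - (\<alpha> * \<alpha>) + 2 * (\<alpha> * \<alpha>) * lam0"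
      hence "k = - \<alpha>*\<alpha>" using k_def sc by (simp add: algebra_simps)
      thus ?A using H by (simp add: algebra_simps)
    qed
  qed
  show ?thesis unfolding L deriv_iff Let_def using M by simp
qed
end
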